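(* There is a $T$-family on $\mathbb N$. More precisely, for every $0<\varepsilon<1$ there are a partition $\mathbb N=\bigcup_n I_n$ into nonempty finite pieces $I_n$ and a pre-compact family $\mathcal F$ on $\mathbb N$ such that: (a) $\mathcal F$ is not $4$-large in any infinite $M\subseteq\mathbb N$; (b) $\mathcal G_{1-\varepsilon}(\mathcal F)=\mathcal G_+(\mathcal F)=\mathfrak S$, where $\mathfrak S=\{s\subseteq\mathbb N:\#s=\min s\}$ is the Schreier barrier; (c) for every $s\in\mathcal F$ one has $s\cap I_n=I_n$, where $n$ is the least $m$ with $s\cap I_m\neq\emptyset$.
   Context: A family on $J$ is a collection of finite subsets of $J$; it is pre-compact if every set in its closure in $2^J$ (product topology) is finite. A family $\mathcal H$ is $n$-large in $J$ if for every infinite $K\subseteq J$ there is $s\in\mathcal H$ with $\#(s\cap K)\ge n$, and large in $J$ if it is $n$-large for every $n$. For finite $s\subseteq\mathbb N$ and $0<\lambda<1$: $s[\lambda]=\{n:\#(s\cap I_n)\ge\lambda\#I_n\}$, $s[+]=\{n:s\cap I_n\ne\emptyset\}$, $\mathcal G_\lambda(\mathcal F)=\{s[\lambda]:s\in\mathcal F\}$, $\mathcal G_+(\mathcal F)=\{s[+]:s\in\mathcal F\}$. A pre-compact family $\mathcal F$ on a set $I$ partitioned into finite pieces $(I_n)_n$ is a $T$-family if it is not large in any infinite $J\subseteq I$ and there is $0<\lambda\le1$ such that $\mathcal G_\lambda(\mathcal F)$ is large in $\mathbb N$. *)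

theory Defs
  imports Complex_Main
begin

definition family_on :: "'a set set \<Rightarrow> 'a set \<Rightarrow> bool" where
  "family_on F J \<longleftrightarrow> (\<forall>s\<in>F. finite s \<and> s \<subseteq> J)"

text \<open>Closure of F in 2^J with the product topology: A is in the closure iff
  every basic neighbourhood (determined by a finite set G of coordinates) meets F.\<close>
definition in_closure :: "'a set set \<Rightarrow> 'a set \<Rightarrow> 'a set \<Rightarrow> bool" where
  "in_closure F J A \<longleftrightarrow> A \<subseteq> J \<and>
     (\<forall>G. finite G \<and> G \<subseteq> J \<longrightarrow> (\<exists>s\<in>F. s \<inter> G = A \<inter> G))"

definition pre_compact :: "'a set set \<Rightarrow> 'a set \<Rightarrow> bool" where
  "pre_compact F J \<longleftrightarrow> (\<forall>A. in_closure F J A \<longrightarrow> finite A)"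

definition n_large :: "nat \<Rightarrow> 'a set set \<Rightarrow> 'a set \<Rightarrow> bool" where
  "n_large n H J \<longleftrightarrow> (\<forall>K. K \<subseteq> J \<and> infinite K \<longrightarrow> (\<exists>s\<in>H. card (s \<inter> K) \<ge> n))"

definition large :: "'a set set \<Rightarrow> 'a set \<Rightarrow> bool" where
  "large H J \<longleftrightarrow> (\<forall>n. n_large n H J)"

definition finite_partition :: "(nat \<Rightarrow> nat set) \<Rightarrow> bool" where
  "finite_partition I \<longleftrightarrow> (\<forall>n. I n \<noteq> {} \<and> finite (I n)) \<and>
     (\<forall>m n. m \<noteq> n \<longrightarrow> I m \<inter> I n = {}) \<and> (\<Union>n. I n) = UNIV"

definition sub_lambda :: "(nat \<Rightarrow> nat set) \<Rightarrow> real \<Rightarrow> nat set \<Rightarrow> nat set" where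
  "sub_lambda I lam s = {n. real (card (s \<inter> I n)) \<ge> lam * real (card (I n))}"

definition sub_plus :: "(nat \<Rightarrow> nat set) \<Rightarrow> nat set \<Rightarrow> nat set" where
  "sub_plus I s = {n. s \<inter> I n \<noteq> {}}"

definition G_lambda :: "(nat \<Rightarrow> nat set) \<Rightarrow> real \<Rightarrow> nat set set \<Rightarrow> nat set set" where
  "G_lambda I lam F = sub_lambda I lam ` F"

definition G_plus :: "(nat \<Rightarrow> nat set) \<Rightarrow> nat set set \<Rightarrow> nat set set" where
  "G_plus I F = sub_plus I ` F"

definition schreier :: "nat set set" where
  "schreier = {s. finite s \<and> s \<noteq> {} \<and> card s = Min s}"

end

theory Submission imports Defs "HOL-Library.Ramsey" "HOL-Library.Countable_Set" "HOL-Library.FuncSet"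
begin

definition Cc :: "nat \<Rightarrow> nat \<Rightarrow> nat" where "Cc N a = (Suc a)^3 * N"
definition Xs :: "nat \<Rightarrow> nat \<Rightarrow> (nat\<times>nat \<Rightarrow> nat) set" where
  "Xs N r = PiE ({..<r} \<times> {..<r}) (\<lambda>p. {..<Cc N (fst p)})"
definition Sg :: "nat \<Rightarrow> (nat \<times> (nat\<times>nat \<Rightarrow> nat)) set" where "Sg N = Sigma UNIV (Xs N)"
definition ff where "ff N = from_nat_into (Sg N)"
definition II where "II N r = {i. fst (ff N i) = r}"
definition Ex where "Ex N t r = {x \<in> Xs N r. \<exists>a\<in>t. \<exists>b\<in>t. \<exists>b'\<in>t. a<b \<and> b<b' \<and> b'<r \<and> x(a,b) = x(a,b')}"
definition ss where "ss N t = {i. fst (ff N i) \<in> t \<and> (fst (ff N i) = Min t \<or> snd (ff N i) \<notin> Ex N t (fst (ff N i)))}"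

lemma Xs_finite: "finite (Xs N r)"
  unfolding Xs_def by (intro finite_PiE) auto

lemma Xs_ne: "N > 0 \<Longrightarrow> Xs N r \<noteq> {}"
  unfolding Xs_def Cc_def by (auto simp: PiE_eq_empty_iff lessThan_empty_iff)

lemma Sg_bij: "N > 0 \<Longrightarrow> bij_betw (ff N) UNIV (Sg N)"
proof -
  assume N: "N > 0"
  have "countable (Sg N)" unfolding Sg_def using Xs_finite
    by (intro countable_SIGMA) (auto intro: countable_finite)
  moreover have "infinite (Sg N)"
  proof
    assume "finite (Sg N)"
    then have "finite (fst ` Sg N)" by simp
    moreover have "fst ` Sg N = UNIV" unfolding Sg_def using Xs_ne[OF N] by force
    ultimately show False by simp
  qed
  ultimately show ?thesis unfolding ff_def by (rule bij_betw_from_nat_into)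
qed

lemma ff_in: "N > 0 \<Longrightarrow> snd (ff N i) \<in> Xs N (fst (ff N i))"
  using Sg_bij[of N] unfolding bij_betw_def Sg_def by (metis UNIV_I imageI mem_Sigma_iff prod.collapse)

lemma II_bij: assumes "N > 0" shows "bij_betw (\<lambda>i. snd (ff N i)) (II N r) (Xs N r)"
proof -
  have b: "bij_betw (ff N) UNIV (Sg N)" using Sg_bij assms by blast
  show ?thesis unfolding bij_betw_def
  proof
    have inj: "inj (ff N)" using b bij_betw_imp_inj_on by blast
    show "inj_on (\<lambda>i. snd (ff N i)) (II N r)"
    proof (rule inj_onI)
      fix i j assume "i \<in> II N r" "j \<in> II N r" "snd (ff N i) = snd (ff N j)"
      then have "ff N i = ff N j" unfolding II_def by (simp add: prod_eq_iff)
      then show "i = j" using inj by (simp add: inj_eq)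
    qed
    show "(\<lambda>i. snd (ff N i)) ` II N r = Xs N r"
    proof
      show "(\<lambda>i. snd (ff N i)) ` II N r \<subseteq> Xs N r" using ff_in[OF assms] unfolding II_def by auto
      show "Xs N r \<subseteq> (\<lambda>i. snd (ff N i)) ` II N r"
      proof
        fix x assume "x \<in> Xs N r"
        then have "(r,x) \<in> Sg N" unfolding Sg_def by auto
        then obtain i where "ff N i = (r,x)" using b unfolding bij_betw_def by (metis UNIV_I image_iff)
        then have "i \<in> II N r" "snd (ff N i) = x" unfolding II_def by auto
        then show "x \<in> (\<lambda>i. snd (ff N i)) ` II N r" by (metis image_eqI)
      qed
    qed
  qed
qed

lemma card_II_sub: assumes "N > 0" "A \<subseteq> Xs N r"
  shows "card {i \<in> II N r. snd (ff N i) \<in> A} = card A"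
proof -
  have "bij_betw (\<lambda>i. snd (ff N i)) {i \<in> II N r. snd (ff N i) \<in> A} A"
    using II_bij[OF assms(1), of r] assms(2) unfolding bij_betw_def inj_on_def by auto
  then show ?thesis by (rule bij_betw_same_card)
qed

lemma II_finite: "N > 0 \<Longrightarrow> finite (II N r)"
  using II_bij Xs_finite bij_betw_finite by blast

lemma card_II: "N > 0 \<Longrightarrow> card (II N r) = card (Xs N r)"
  using II_bij bij_betw_same_card by blast

lemma card_II_pos: "N > 0 \<Longrightarrow> card (II N r) > 0"
  using card_II Xs_finite Xs_ne by (simp add: card_gt_0_iff)

lemma partition: "N > 0 \<Longrightarrow> finite_partition (II N)"
proof -
  assume N: "N > 0"
  have "II N n \<noteq> {}" for n using card_II_pos[OF N, of n] by auto
  moreover have "II N m \<inter> II N n = {}" if "m \<noteq> n" for m n using that by (auto simp: II_def)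
  moreover have "(\<Union>n. II N n) = UNIV" by (auto simp: II_def)
  ultimately show ?thesis unfolding finite_partition_def using II_finite[OF N] by blast
qed

lemma E_card:
  assumes "a < b" "b < b'" "b' < r"
  shows "card {x\<in>Xs N r. x(a,b) = x(a,b')} * Cc N a \<le> card (Xs N r)"
proof -
  let ?E = "{x\<in>Xs N r. x(a,b) = x(a,b')}"
  let ?g = "\<lambda>(x::nat\<times>nat\<Rightarrow>nat, c::nat). x((a,b') := c)"
  have inj: "inj_on ?g (?E \<times> {..<Cc N a})"
  proof (rule inj_onI)
    fix p q assume p: "p \<in> ?E \<times> {..<Cc N a}" and q: "q \<in> ?E \<times> {..<Cc N a}" and eqg: "?g p = ?g q"
    obtain x c where pp: "p = (x,c)" by (cases p)
    obtain y d where qq: "q = (y,d)" by (cases q)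
    have x: "x \<in> ?E" using p pp by simp
    have y: "y \<in> ?E" using q qq by simp
    have eq: "x((a, b') := c) = y((a, b') := d)" using eqg pp qq by simp
    have "c = d" using fun_cong[OF eq, of "(a,b')"] by simp
    have ab: "x(a,b) = y(a,b)" using fun_cong[OF eq, of "(a,b)"] assms by simp
    have "x = y"
    proof
      fix p show "x p = y p"
      proof (cases "p = (a,b')")
        case True then show ?thesis using x y ab by auto
      next
        case False then show ?thesis using fun_cong[OF eq, of p] by simp
      qed
    qed
    then show "p = q" using \<open>c = d\<close> pp qq by simp
  qed
  have img: "?g ` (?E \<times> {..<Cc N a}) \<subseteq> Xs N r"
  proof
    fix z assume "z \<in> ?g ` (?E \<times> {..<Cc N a})"
    then obtain x c where x: "x \<in> ?E" "c < Cc N a" and z: "z = x((a,b') := c)" by auto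
    have xX: "x \<in> Xs N r" using x by simp
    have ins: "insert (a,b') ({..<r} \<times> {..<r}) = {..<r} \<times> {..<r}" using assms by auto
    have "x((a,b') := c) \<in> PiE (insert (a,b') ({..<r} \<times> {..<r})) (\<lambda>p. {..<Cc N (fst p)})"
      using xX x(2) unfolding Xs_def by (intro PiE_fun_upd) auto
    then show "z \<in> Xs N r" unfolding z Xs_def ins .
  qed
  have "card (?E \<times> {..<Cc N a}) \<le> card (Xs N r)"
    using card_inj_on_le[OF inj img Xs_finite] .
  then show ?thesis by (simp add: card_cartesian_product)
qed

lemma Ex_bound:
  assumes "\<forall>a\<in>t. m \<le> a" "card t = m" "finite t"
  shows "card (Ex N t r) * ((Suc m)^3 * N) \<le> m^3 * card (Xs N r)"
proof -
  define T where "T = {(a,b,b'). a\<in>t \<and> b\<in>t \<and> b'\<in>t \<and> a<b \<and> b<b' \<and> b'<r}"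
  define E where "E = (\<lambda>(a,b,b'). {x\<in>Xs N r. x(a,b) = x(a,b')})"
  have TS: "T \<subseteq> t \<times> t \<times> t" unfolding T_def by auto
  have fT: "finite T" using TS assms(3) finite_subset by blast
  have cT: "card T \<le> m^3"
  proof -
    have "card T \<le> card (t \<times> t \<times> t)" using TS assms(3) by (intro card_mono) auto
    also have "\<dots> = m^3" using assms(2) by (simp add: card_cartesian_product power3_eq_cube)
    finally show ?thesis .
  qed
  have ExU: "Ex N t r = (\<Union>p\<in>T. E p)" unfolding Ex_def T_def E_def by auto
  have each: "card (E p) * ((Suc m)^3 * N) \<le> card (Xs N r)" if "p \<in> T" for p
  proof -
    obtain a b b' where p: "p = (a,b,b')" by (cases p)
    have "a < b" "b < b'" "b' < r" "a \<in> t" using that unfolding p T_def by auto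
    have "(Suc m)^3 * N \<le> Cc N a" unfolding Cc_def using assms(1) \<open>a \<in> t\<close>
      by (intro mult_right_mono power_mono) auto
    then have "card (E p) * ((Suc m)^3 * N) \<le> card (E p) * Cc N a" by simp
    also have "\<dots> \<le> card (Xs N r)" unfolding p E_def using E_card[OF \<open>a<b\<close> \<open>b<b'\<close> \<open>b'<r\<close>] by simp
    finally show ?thesis .
  qed
  have "card (Ex N t r) \<le> (\<Sum>p\<in>T. card (E p))" unfolding ExU using card_UN_le[OF fT] .
  then have "card (Ex N t r) * ((Suc m)^3 * N) \<le> (\<Sum>p\<in>T. card (E p)) * ((Suc m)^3 * N)" by simp
  also have "\<dots> = (\<Sum>p\<in>T. card (E p) * ((Suc m)^3 * N))" by (simp add: sum_distrib_right)
  also have "\<dots> \<le> (\<Sum>p\<in>T. card (Xs N r))" using each by (intro sum_mono) auto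
  also have "\<dots> = card T * card (Xs N r)" by simp
  also have "\<dots> \<le> m^3 * card (Xs N r)" using cT by simp
  finally show ?thesis .
qed

lemma schreier_facts:
  assumes "t \<in> schreier"
  shows "finite t" "t \<noteq> {}" "card t = Min t" "Min t \<in> t" "\<And>a. a \<in> t \<Longrightarrow> Min t \<le> a" "Min t > 0"
proof -
  show ft: "finite t" and ne: "t \<noteq> {}" and c: "card t = Min t" using assms unfolding schreier_def by auto
  show "Min t \<in> t" using ft ne by simp
  show "\<And>a. a \<in> t \<Longrightarrow> Min t \<le> a" using ft by simp
  show "Min t > 0" using c ft ne card_gt_0_iff by fastforce
qed

lemma ss_out: "r \<notin> t \<Longrightarrow> ss N t \<inter> II N r = {}"
  unfolding ss_def II_def by auto

lemma ss_min: "Min t \<in> t \<Longrightarrow> ss N t \<inter> II N (Min t) = II N (Min t)"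
  unfolding ss_def II_def by auto

lemma ss_mid: assumes "N > 0" "r \<in> t" "r \<noteq> Min t"
  shows "ss N t \<inter> II N r = {i \<in> II N r. snd (ff N i) \<in> Xs N r - Ex N t r}"
  using assms ff_in[OF assms(1)] unfolding ss_def II_def by auto

lemma ss_mid_card:
  assumes "t \<in> schreier" "N > 0" "r \<in> t" "r \<noteq> Min t" "0 < e" "e * real N \<ge> 1"
  shows "real (card (ss N t \<inter> II N r)) \<ge> (1 - e) * real (card (II N r))"
proof -
  let ?m = "Min t"
  note sf = schreier_facts[OF assms(1)]
  have Exs: "Ex N t r \<subseteq> Xs N r" unfolding Ex_def by auto
  have c1: "card (ss N t \<inter> II N r) = card (Xs N r - Ex N t r)"
    unfolding ss_mid[OF assms(2-4)] by (rule card_II_sub[OF assms(2)]) auto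
  have c2: "card (Xs N r - Ex N t r) = card (Xs N r) - card (Ex N t r)"
    using Exs Xs_finite by (simp add: card_Diff_subset finite_subset)
  have cle: "card (Ex N t r) \<le> card (Xs N r)" using Exs Xs_finite card_mono by blast
  have B: "card (Ex N t r) * ((Suc ?m)^3 * N) \<le> ?m^3 * card (Xs N r)"
    using Ex_bound[of t ?m N r] sf by auto
  have le: "?m^3 * card (Xs N r) \<le> (Suc ?m)^3 * card (Xs N r)" by (intro mult_right_mono power_mono) auto
  have "(Suc ?m)^3 * (card (Ex N t r) * N) = card (Ex N t r) * ((Suc ?m)^3 * N)" by (simp add: ac_simps)
  also have "\<dots> \<le> ?m^3 * card (Xs N r)" by (rule B)
  also have "\<dots> \<le> (Suc ?m)^3 * card (Xs N r)" by (rule le)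
  finally have "(Suc ?m)^3 * (card (Ex N t r) * N) \<le> (Suc ?m)^3 * card (Xs N r)" .
  then have B2: "card (Ex N t r) * N \<le> card (Xs N r)" by simp
  then have "real (card (Ex N t r)) * real N \<le> real (card (Xs N r))" by (metis of_nat_le_iff of_nat_mult)
  then have "real (card (Ex N t r)) * 1 \<le> real (card (Xs N r)) * e"
  proof -
    assume h: "real (card (Ex N t r)) * real N \<le> real (card (Xs N r))"
    have "real (card (Ex N t r)) * 1 \<le> real (card (Ex N t r)) * (e * real N)"
      using assms(6) by (intro mult_left_mono) auto
    also have "\<dots> = e * (real (card (Ex N t r)) * real N)" by simp
    also have "\<dots> \<le> e * real (card (Xs N r))" using h assms(5) by (intro mult_left_mono) auto
    finally show ?thesis by (simp add: mult.commute)
  qed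
  then show ?thesis unfolding c1 c2 card_II[OF assms(2)] using cle
    by (simp add: of_nat_diff algebra_simps)
qed

lemma ss_lambda:
  assumes "t \<in> schreier" "N > 0" "0 < e" "e < 1" "e * real N \<ge> 1"
  shows "sub_lambda (II N) (1 - e) (ss N t) = t"
proof -
  have "n \<in> sub_lambda (II N) (1 - e) (ss N t) \<longleftrightarrow> n \<in> t" for n
  proof (cases "n \<in> t")
    case True
    show ?thesis
    proof (cases "n = Min t")
      case True
      have "real (card (II N n)) \<ge> (1 - e) * real (card (II N n))" using assms(3) by (simp add: algebra_simps)
      then show ?thesis using \<open>n \<in> t\<close> ss_min[of t N] True unfolding sub_lambda_def by auto
    next
      case False
      then show ?thesis using ss_mid_card[OF assms(1,2) \<open>n\<in>t\<close> False assms(3,5)] \<open>n \<in> t\<close>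
        unfolding sub_lambda_def by auto
    qed
  next
    case False
    have "card (II N n) > 0" using card_II_pos[OF assms(2)] .
    then have "(1 - e) * real (card (II N n)) > 0" using assms(4) by simp
    then show ?thesis using ss_out[OF False, of N] False unfolding sub_lambda_def by auto
  qed
  then show ?thesis by blast
qed

lemma ss_plus:
  assumes "t \<in> schreier" "N > 0" "0 < e" "e < 1" "e * real N \<ge> 1"
  shows "sub_plus (II N) (ss N t) = t"
proof -
  have "n \<in> sub_plus (II N) (ss N t) \<longleftrightarrow> n \<in> t" for n
  proof (cases "n \<in> t")
    case True
    have "n \<in> sub_lambda (II N) (1 - e) (ss N t)" using ss_lambda[OF assms] True by simp
    then have "real (card (ss N t \<inter> II N n)) \<ge> (1 - e) * real (card (II N n))" unfolding sub_lambda_def by simp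
    moreover have "(1 - e) * real (card (II N n)) > 0" using card_II_pos[OF assms(2)] assms(4) by simp
    ultimately have "card (ss N t \<inter> II N n) \<noteq> 0" by linarith
    then have "ss N t \<inter> II N n \<noteq> {}" by auto
    then show ?thesis using True unfolding sub_plus_def by auto
  next
    case False
    then show ?thesis using ss_out[OF False, of N] unfolding sub_plus_def by auto
  qed
  then show ?thesis by blast
qed

lemma ss_least:
  assumes "t \<in> schreier" "N > 0"
  shows "(LEAST m. ss N t \<inter> II N m \<noteq> {}) = Min t"
proof (rule Least_equality)
  show "ss N t \<inter> II N (Min t) \<noteq> {}" using ss_min[of t N] schreier_facts(4)[OF assms(1)] card_II_pos[OF assms(2), of "Min t"] by auto
next
  fix y assume "ss N t \<inter> II N y \<noteq> {}"
  then have "y \<in> t" using ss_out by blast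
  then show "Min t \<le> y" using schreier_facts(5)[OF assms(1)] by blast
qed

lemma ss_finite:
  assumes "t \<in> schreier" "N > 0"
  shows "finite (ss N t)"
proof -
  have "ss N t \<subseteq> (\<Union>r\<in>t. II N r)" unfolding ss_def II_def by auto
  then show ?thesis using schreier_facts(1)[OF assms(1)] II_finite[OF assms(2)] finite_subset by blast
qed

lemma ss_fst: "i \<in> ss N t \<Longrightarrow> fst (ff N i) \<in> t"
  unfolding ss_def by auto

lemma pieces_infinite:
  assumes "N > 0" "infinite A"
  shows "infinite {r. A \<inter> II N r \<noteq> {}}"
proof
  assume f: "finite {r. A \<inter> II N r \<noteq> {}}"
  have "A \<subseteq> (\<Union>r\<in>{r. A \<inter> II N r \<noteq> {}}. II N r)" unfolding II_def by auto
  moreover have "finite (\<Union>r\<in>{r. A \<inter> II N r \<noteq> {}}. II N r)" using f II_finite[OF assms(1)] by blast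
  ultimately show False using assms(2) finite_subset by blast
qed

lemma pick_piece: "A \<inter> II N r \<noteq> {} \<Longrightarrow> (SOME i. i \<in> A \<inter> II N r) \<in> A \<inter> II N r"
  by (metis (no_types) some_in_eq)

lemma ss_precompact: assumes "N > 0" shows "pre_compact (ss N ` schreier) UNIV"
  unfolding pre_compact_def
proof (intro allI impI)
  fix A assume cl: "in_closure (ss N ` schreier) UNIV A"
  show "finite A"
  proof (rule ccontr)
    assume inf: "infinite A"
    then obtain a where a: "a \<in> A" by (metis ex_in_conv infinite_imp_nonempty)
    define p where "p = fst (ff N a)"
    define Q where "Q = {r. A \<inter> II N r \<noteq> {}}"
    have infQ: "infinite Q" unfolding Q_def using pieces_infinite[OF assms inf] .
    obtain R where R: "R \<subseteq> Q" "finite R" "card R = Suc p" using infinite_arbitrarily_large[OF infQ] by blast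
    define z where "z r = (SOME i. i \<in> A \<inter> II N r)" for r
    have z: "z r \<in> A \<inter> II N r" if "r \<in> Q" for r using that pick_piece unfolding Q_def z_def by blast
    define G where "G = insert a (z ` R)"
    have "finite G" unfolding G_def using R(2) by simp
    then obtain s where s: "s \<in> ss N ` schreier" "s \<inter> G = A \<inter> G" using cl unfolding in_closure_def by blast
    have GA: "G \<subseteq> A" using a z R(1) unfolding G_def by auto
    then have Gs: "G \<subseteq> s" using s(2) by auto
    obtain t where t: "t \<in> schreier" "s = ss N t" using s(1) by auto
    have "p \<in> t" using ss_fst[of a N t] Gs t(2) unfolding G_def p_def by auto
    then have mp: "Min t \<le> p" using schreier_facts(5)[OF t(1)] by blast
    have Rt: "R \<subseteq> t"
    proof
      fix r assume "r \<in> R"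
      then have "z r \<in> s" "z r \<in> II N r" using Gs z R(1) unfolding G_def by auto
      then show "r \<in> t" using ss_fst[of "z r" N t] t(2) unfolding II_def by auto
    qed
    have "card R \<le> card t" using Rt schreier_facts(1)[OF t(1)] card_mono by blast
    then show False using R(3) mp schreier_facts(3)[OF t(1)] by simp
  qed
qed

lemma sorted4: "a < b \<Longrightarrow> b < c \<Longrightarrow> c < (d::nat) \<Longrightarrow> sorted_list_of_set {a,b,c,d} = [a,b,c,d]"
proof -
  assume "a < b" "b < c" "c < d"
  then have "sorted_list_of_set (set [a,b,c,d]) = [a,b,c,d]"
    by (intro sorted_list_of_set.idem_if_sorted_distinct) auto
  then show ?thesis by simp
qed

lemma not4:
  assumes N: "N > 0" and M: "infinite M"
  shows "\<not> n_large 4 (ss N ` schreier) M"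
proof -
  define P where "P = {r. M \<inter> II N r \<noteq> {}}"
  have infP: "infinite P" unfolding P_def using pieces_infinite[OF N M] .
  define y where "y r = (SOME i. i \<in> M \<inter> II N r)" for r
  have y: "y r \<in> M \<inter> II N r" if "r \<in> P" for r using that pick_piece unfolding P_def y_def by blast
  have yfst: "fst (ff N (y r)) = r" if "r \<in> P" for r using y[OF that] unfolding II_def by auto
  define xv where "xv r = snd (ff N (y r))" for r
  have xv: "xv r \<in> Xs N r" if "r \<in> P" for r using ff_in[OF N, of "y r"] yfst[OF that] unfolding xv_def by simp
  define col :: "nat set \<Rightarrow> nat" where
    "col Y = (let l = sorted_list_of_set Y in if xv (l!3) (l!0, l!1) = xv (l!3) (l!0, l!2) then 0 else 1)" for Y
  have col_eq: "col {a,b,c,d} = (if xv d (a,b) = xv d (a,c) then 0 else 1)"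
    if "a < b" "b < c" "c < d" for a b c d
    unfolding col_def Let_def sorted4[OF that] by (simp add: numeral_eq_Suc)
  have "\<forall>X. X \<subseteq> P \<and> finite X \<and> card X = 4 \<longrightarrow> col X < 2" unfolding col_def Let_def by auto
  from Ramsey[OF infP this] obtain H c where H: "H \<subseteq> P" "infinite H" "c < 2"
    "\<forall>X. X \<subseteq> H \<and> finite X \<and> card X = 4 \<longrightarrow> col X = c" by blast
  have hom: "col {a,b,b',d} = c" if "a \<in> H" "b \<in> H" "b' \<in> H" "d \<in> H" "a < b" "b < b'" "b' < d" for a b b' d
    using H(4) that by (simp add: card_insert_if)
  have c0: "c = 0"
  proof (rule ccontr)
    assume "c \<noteq> 0"
    then have c1: "c = 1" using H(3) by simp
    obtain a where a: "a \<in> H" using H(2) by (metis ex_in_conv infinite_imp_nonempty)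
    have infH': "infinite (H - {..a})" using H(2) by simp
    obtain B where B: "B \<subseteq> H - {..a}" "finite B" "card B = Suc (Cc N a)"
      using infinite_arbitrarily_large[OF infH'] by blast
    obtain d where d: "d \<in> H" "d > Max B" using H(2) by (meson infinite_nat_iff_unbounded)
    have Bd: "b < d" if "b \<in> B" for b using Max_ge[OF B(2) that] d(2) by linarith
    have Ba: "a < b" "b \<in> H" if "b \<in> B" for b using that B(1) by auto
    have xd: "xv d \<in> Xs N d" using xv H(1) d(1) by blast
    have map: "(\<lambda>b. xv d (a,b)) ` B \<subseteq> {..<Cc N a}"
    proof
      fix v assume "v \<in> (\<lambda>b. xv d (a,b)) ` B"
      then obtain b where b: "b \<in> B" "v = xv d (a,b)" by auto
      have "(a,b) \<in> {..<d} \<times> {..<d}" using Bd[OF b(1)] Ba(1)[OF b(1)] by auto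
      then show "v \<in> {..<Cc N a}" using xd b(2) unfolding Xs_def by (auto simp: PiE_iff)
    qed
    have "\<not> inj_on (\<lambda>b. xv d (a,b)) B"
    proof
      assume "inj_on (\<lambda>b. xv d (a,b)) B"
      then have "card B \<le> card {..<Cc N a}" using card_inj_on_le[OF _ map] by blast
      then show False using B(3) by simp
    qed
    then obtain b1 b2 where b: "b1 \<in> B" "b2 \<in> B" "b1 \<noteq> b2" "xv d (a,b1) = xv d (a,b2)"
      unfolding inj_on_def by blast
    have "col {a, min b1 b2, max b1 b2, d} = 0"
      using col_eq[of a "min b1 b2" "max b1 b2" d] b Ba Bd by (auto simp: min_def max_def)
    moreover have "col {a, min b1 b2, max b1 b2, d} = c"
      using hom[of a "min b1 b2" "max b1 b2" d] b Ba Bd a d(1) by (auto simp: min_def max_def)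
    ultimately show False using c1 by simp
  qed
  define K where "K = y ` H"
  have injy: "inj_on y H"
  proof (rule inj_onI)
    fix r r' assume "r \<in> H" "r' \<in> H" "y r = y r'"
    then show "r = r'" using yfst H(1) by (metis subsetD)
  qed
  have KM: "K \<subseteq> M" unfolding K_def using y H(1) by auto
  have infK: "infinite K" unfolding K_def using injy H(2) finite_imageD by blast
  have small: "\<not> card (s \<inter> K) \<ge> 4" if sF: "s \<in> ss N ` schreier" for s
  proof
    assume c4: "card (s \<inter> K) \<ge> 4"
    obtain t where t: "t \<in> schreier" "s = ss N t" using sF by blast
    define R where "R = {r \<in> H. y r \<in> s}"
    have sK: "s \<inter> K = y ` R" unfolding R_def K_def by auto
    have Rt: "R \<subseteq> t" unfolding R_def using ss_fst yfst H(1) t(2) by fastforce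
    have fR: "finite R" using Rt schreier_facts(1)[OF t(1)] finite_subset by blast
    have "card (y ` R) \<le> card R" using fR card_image_le by blast
    then have "card R \<ge> 4" using c4 sK by simp
    then obtain X where X: "X \<subseteq> R" "card X = 4" using obtain_subset_with_card_n by metis
    then have "X \<in> [R]\<^bsup>4\<^esup>" unfolding nsets_def using fR finite_subset by fastforce
    then obtain r1 r2 r3 r4 where r: "r1 \<in> R" "r2 \<in> R" "r3 \<in> R" "r4 \<in> R" "r1 < r2" "r2 < r3" "r3 < r4"
      unfolding ordered_nsets_4_eq by blast
    have rH: "r1 \<in> H" "r2 \<in> H" "r3 \<in> H" "r4 \<in> H" using r unfolding R_def by auto
    have rt: "r1 \<in> t" "r2 \<in> t" "r3 \<in> t" using r Rt by auto
    have "col {r1,r2,r3,r4} = 0" using hom[OF rH r(5-7)] c0 by simp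
    then have eqv: "xv r4 (r1,r2) = xv r4 (r1,r3)" using col_eq[OF r(5-7)] by (simp split: if_splits)
    have "xv r4 \<in> Ex N t r4" unfolding Ex_def using xv H(1) rH(4) rt r(5-7) eqv by blast
    moreover have "r4 \<noteq> Min t" using schreier_facts(5)[OF t(1) rt(1)] r(5-7) by simp
    moreover have "y r4 \<in> s" using r(4) unfolding R_def by simp
    ultimately show False using t(2) yfst[of r4] H(1) rH(4) unfolding ss_def xv_def by auto
  qed
  show ?thesis unfolding n_large_def using KM infK small by blast
qed

theorem theorem4p6:
  fixes \<epsilon> :: real
  assumes "0 < \<epsilon>" and "\<epsilon> < 1"
  shows "\<exists>(I :: nat \<Rightarrow> nat set) (F :: nat set set).
           finite_partition I \<and> family_on F UNIV \<and> pre_compact F UNIV \<and>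
           (\<forall>M. infinite M \<longrightarrow> \<not> n_large 4 F M) \<and>
           G_lambda I (1 - \<epsilon>) F = schreier \<and> G_plus I F = schreier \<and>
           (\<forall>s\<in>F. s \<inter> I (LEAST m. s \<inter> I m \<noteq> {}) = I (LEAST m. s \<inter> I m \<noteq> {}))"
proof -
  define N where "N = nat \<lceil>1 / \<epsilon>\<rceil>"
  have pos: "1 / \<epsilon> > 0" using assms by simp
  have "real N = of_int \<lceil>1 / \<epsilon>\<rceil>" unfolding N_def using pos by simp
  then have RN: "real N \<ge> 1 / \<epsilon>" by linarith
  then have N0: "N > 0" using pos by linarith
  have eN: "\<epsilon> * real N \<ge> 1" using RN assms(1) by (simp add: field_simps)
  let ?F = "ss N ` schreier"
  have fam: "family_on ?F UNIV" unfolding family_on_def using ss_finite[OF _ N0] by auto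
  have GL: "G_lambda (II N) (1 - \<epsilon>) ?F = schreier"
  proof -
    have "G_lambda (II N) (1 - \<epsilon>) ?F = (\<lambda>t. sub_lambda (II N) (1 - \<epsilon>) (ss N t)) ` schreier"
      unfolding G_lambda_def by (simp add: image_image)
    also have "\<dots> = (\<lambda>t. t) ` schreier" using ss_lambda[OF _ N0 assms eN] by (intro image_cong) auto
    finally show ?thesis by simp
  qed
  have GP: "G_plus (II N) ?F = schreier"
  proof -
    have "G_plus (II N) ?F = (\<lambda>t. sub_plus (II N) (ss N t)) ` schreier"
      unfolding G_plus_def by (simp add: image_image)
    also have "\<dots> = (\<lambda>t. t) ` schreier" using ss_plus[OF _ N0 assms eN] by (intro image_cong) auto
    finally show ?thesis by simp
  qed
  have lst: "\<forall>s\<in>?F. s \<inter> II N (LEAST m. s \<inter> II N m \<noteq> {}) = II N (LEAST m. s \<inter> II N m \<noteq> {})"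
    using ss_least[OF _ N0] ss_min schreier_facts(4) by auto
  show ?thesis
    using partition[OF N0] fam ss_precompact[OF N0] not4[OF N0] GL GP lst by blast
qed

end
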